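(* Let $(\bar x,\bar y)$ be a local minimax point of $\min_{x\in X}\max_{y\in Y}f(x,y)$. Suppose $f$ is twice semidifferentiable at $(\bar x,\bar y)$, the separation property holds for the subderivative of $f$ at $(\bar x,\bar y)$, and for every $h\in T_Y(\bar y)\setminus\{0\}$ with $\mathrm{d}_yf(\bar x,\bar y)(h)=0$ we have $$\mathrm{d}^2_{yy}f(\bar x,\bar y)(h)-\mathrm{d}^2\delta_X(\bar x;\mathrm{d}_xf(\bar x,\bar y))(0)-\mathrm{d}^2\delta_Y(\bar y;\mathrm{d}_yf(\bar x,\bar y))(h)<0,$$ where at least one of $\mathrm{d}^2\delta_X(\bar x;\mathrm{d}_xf(\bar x,\bar y))(0)$ and $\mathrm{d}^2\delta_Y(\bar y;\mathrm{d}_yf(\bar x,\bar y))(h)$ is finite. Then $(\bar x,\bar y)$ is a calm local minimax point.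
   Context: $X\subseteq\mathbb{R}^n$, $Y\subseteq\mathbb{R}^m$ nonempty closed, $f:\mathbb{R}^n\times\mathbb{R}^m\to\mathbb{R}$; $\mathbb{B}_\epsilon(z)$ closed Euclidean ball. Standing assumption: for every $x\in X$, $\bar y\in Y$, $\epsilon\ge0$ the maximum of $f(x,\cdot)$ over $Y\cap\mathbb{B}_\epsilon(\bar y)$ is attained. A radius function is $\tau:[0,\infty)\to[0,\infty)$ with $\tau(0)=0$, $\tau(\delta)\to0$ as $\delta\downarrow0$; calm at $0$ if $\tau(\delta)\le\kappa\delta$ for all $\delta\in[0,\delta_1]$ for some $\kappa,\delta_1>0$. $(\bar x,\bar y)\in X\times Y$ is a local minimax point if there exist $\delta_0>0$ and a radius function $\tau$ with $f(\bar x,y)\le f(\bar x,\bar y)\le\max_{y'\in Y\cap\mathbb{B}_{\tau(\delta)}(\bar y)}f(x,y')$ for all $\delta\in(0,\delta_0]$, $x\in X\cap\mathbb{B}_\delta(\bar x)$, $y\in Y\cap\mathbb{B}_\delta(\bar y)$; calm local minimax if moreover $\tau$ can be taken calm at $0$. Variational notation: for $\psi:\mathbb{R}^r\to\mathbb{R}$, $\mathrm{d}\psi(\bar z)(w):=\liminf_{t\downarrow0,w'\to w}\frac{\psi(\bar z+tw')-\psi(\bar z)}{t}$; semidifferentiable at $\bar z$ if for each $w$ this is a limit (real-valued); $\mathrm{d}^2\psi(\bar z)(w):=\liminf_{t\downarrow0,w'\to w}\frac{\psi(\bar z+tw')-\psi(\bar z)-t\,\mathrm{d}\psi(\bar z)(w')}{\frac12t^2}$;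 twice semidifferentiable if semidifferentiable and for each $w$ this liminf is a limit (real-valued). $\mathrm{d}_xf(\bar x,\bar y)(u)$ is the subderivative of $f(\cdot,\bar y)$ at $\bar x$; $\mathrm{d}_yf(\bar x,\bar y)(h)$ and $\mathrm{d}^2_{yy}f(\bar x,\bar y)(h)$ are the subderivative and second subderivative of $f(\bar x,\cdot)$ at $\bar y$; $\mathrm{d}f(\bar x,\bar y)(u,h)$ is the subderivative of $f$. The separation property for the subderivative holds at $(\bar x,\bar y)$ if $\mathrm{d}f(\bar x,\bar y)(u,h)=\mathrm{d}_xf(\bar x,\bar y)(u)+\mathrm{d}_yf(\bar x,\bar y)(h)$ for all $(u,h)$. $T_S(\bar z)$ is the tangent cone. For closed $S$, $\bar z\in S$, $\varphi:\mathbb{R}^r\to\mathbb{R}$: $\mathrm{d}^2\delta_S(\bar z;\varphi)(w):=\liminf_{t\downarrow0,\,w'\to w,\ \bar z+tw'\in S}\frac{-2\varphi(w')}{t}$ ($+\infty$ if no such $t,w'$). *)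

theory Defs
  imports "HOL-Analysis.Analysis" "HOL-Library.Extended_Real" "HOL-Library.Liminf_Limsup"
begin

definition subderiv :: "('v::real_normed_vector \<Rightarrow> real) \<Rightarrow> 'v \<Rightarrow> 'v \<Rightarrow> ereal" where
  "subderiv \<psi> z w = Liminf (at_right 0 \<times>\<^sub>F nhds w)
     (\<lambda>(t, w'). ereal ((\<psi> (z + t *\<^sub>R w') - \<psi> z) / t))"

definition semidifferentiable :: "('v::real_normed_vector \<Rightarrow> real) \<Rightarrow> 'v \<Rightarrow> bool" where
  "semidifferentiable \<psi> z \<longleftrightarrow> (\<forall>w. \<exists>L::real.
     ((\<lambda>(t, w'). (\<psi> (z + t *\<^sub>R w') - \<psi> z) / t) \<longlongrightarrow> L) (at_right 0 \<times>\<^sub>F nhds w))"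

definition second_quot :: "('v::real_normed_vector \<Rightarrow> real) \<Rightarrow> 'v \<Rightarrow> real \<times> 'v \<Rightarrow> ereal" where
  "second_quot \<psi> z = (\<lambda>(t, w'). (ereal (\<psi> (z + t *\<^sub>R w') - \<psi> z) - ereal t * subderiv \<psi> z w')
                                  / ereal (t\<^sup>2 / 2))"

definition second_subderiv :: "('v::real_normed_vector \<Rightarrow> real) \<Rightarrow> 'v \<Rightarrow> 'v \<Rightarrow> ereal" where
  "second_subderiv \<psi> z w = Liminf (at_right 0 \<times>\<^sub>F nhds w) (second_quot \<psi> z)"

definition twice_semidifferentiable :: "('v::real_normed_vector \<Rightarrow> real) \<Rightarrow> 'v \<Rightarrow> bool" where
  "twice_semidifferentiable \<psi> z \<longleftrightarrow> semidifferentiable \<psi> z \<and>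
     (\<forall>w. \<exists>L::real. (second_quot \<psi> z \<longlongrightarrow> ereal L) (at_right 0 \<times>\<^sub>F nhds w))"

definition tangent_cone :: "'v::real_normed_vector set \<Rightarrow> 'v \<Rightarrow> 'v set" where
  "tangent_cone S z = {w. \<exists>t ws. (\<forall>k. t k > 0) \<and> t \<longlonglongrightarrow> 0 \<and> ws \<longlonglongrightarrow> w \<and>
                              (\<forall>k. z + t k *\<^sub>R ws k \<in> S)}"

text \<open>Second subderivative of the indicator of S at z relative to phi
  (phi allowed extended-real valued; +infinity if the constraint filter is trivial).\<close>
definition second_subderiv_ind :: "'v::real_normed_vector set \<Rightarrow> 'v \<Rightarrow> ('v \<Rightarrow> ereal) \<Rightarrow> 'v \<Rightarrow> ereal" where
  "second_subderiv_ind S z \<phi> w = Liminf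
     (inf (at_right 0 \<times>\<^sub>F nhds w) (principal {(t, w'). z + t *\<^sub>R w' \<in> S}))
     (\<lambda>(t, w'). (- 2 * \<phi> w') / ereal t)"

definition dx_f :: "('a::real_normed_vector \<Rightarrow> 'b::real_normed_vector \<Rightarrow> real) \<Rightarrow> 'a \<Rightarrow> 'b \<Rightarrow> 'a \<Rightarrow> ereal" where
  "dx_f f x y u = subderiv (\<lambda>x'. f x' y) x u"

definition dy_f :: "('a::real_normed_vector \<Rightarrow> 'b::real_normed_vector \<Rightarrow> real) \<Rightarrow> 'a \<Rightarrow> 'b \<Rightarrow> 'b \<Rightarrow> ereal" where
  "dy_f f x y h = subderiv (\<lambda>y'. f x y') y h"

definition dyy_f :: "('a::real_normed_vector \<Rightarrow> 'b::real_normed_vector \<Rightarrow> real) \<Rightarrow> 'a \<Rightarrow> 'b \<Rightarrow> 'b \<Rightarrow> ereal" where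
  "dyy_f f x y h = second_subderiv (\<lambda>y'. f x y') y h"

definition separation_property :: "('a::real_normed_vector \<Rightarrow> 'b::real_normed_vector \<Rightarrow> real) \<Rightarrow> 'a \<Rightarrow> 'b \<Rightarrow> bool" where
  "separation_property f x y \<longleftrightarrow> (\<forall>u h.
     subderiv (\<lambda>p. f (fst p) (snd p)) (x, y) (u, h) = dx_f f x y u + dy_f f x y h)"

definition radius_function :: "(real \<Rightarrow> real) \<Rightarrow> bool" where
  "radius_function \<tau> \<longleftrightarrow> \<tau> 0 = 0 \<and> (\<forall>\<delta>\<ge>0. \<tau> \<delta> \<ge> 0) \<and> (\<tau> \<longlongrightarrow> 0) (at_right 0)"

definition calm_at_0 :: "(real \<Rightarrow> real) \<Rightarrow> bool" where
  "calm_at_0 \<tau> \<longleftrightarrow> (\<exists>\<kappa>>0. \<exists>\<delta>1>0. \<forall>\<delta>. 0 \<le> \<delta> \<and> \<delta> \<le> \<delta>1 \<longrightarrow> \<tau> \<delta> \<le> \<kappa> * \<delta>)"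

text \<open>Local minimax with radius function tau (max written as Sup; it is attained
  under the standing assumption).\<close>
definition minimax_with :: "'a::real_normed_vector set \<Rightarrow> 'b::real_normed_vector set \<Rightarrow>
    ('a \<Rightarrow> 'b \<Rightarrow> real) \<Rightarrow> 'a \<Rightarrow> 'b \<Rightarrow> (real \<Rightarrow> real) \<Rightarrow> bool" where
  "minimax_with X Y f xb yb \<tau> \<longleftrightarrow> radius_function \<tau> \<and> (\<exists>\<delta>0>0. \<forall>\<delta>. 0 < \<delta> \<and> \<delta> \<le> \<delta>0 \<longrightarrow>
     (\<forall>x \<in> X \<inter> cball xb \<delta>. \<forall>y \<in> Y \<inter> cball yb \<delta>.
        f xb y \<le> f xb yb \<and> f xb yb \<le> Sup (f x ` (Y \<inter> cball yb (\<tau> \<delta>)))))"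

definition local_minimax :: "'a::real_normed_vector set \<Rightarrow> 'b::real_normed_vector set \<Rightarrow>
    ('a \<Rightarrow> 'b \<Rightarrow> real) \<Rightarrow> 'a \<Rightarrow> 'b \<Rightarrow> bool" where
  "local_minimax X Y f xb yb \<longleftrightarrow> xb \<in> X \<and> yb \<in> Y \<and> (\<exists>\<tau>. minimax_with X Y f xb yb \<tau>)"

definition calm_local_minimax :: "'a::real_normed_vector set \<Rightarrow> 'b::real_normed_vector set \<Rightarrow>
    ('a \<Rightarrow> 'b \<Rightarrow> real) \<Rightarrow> 'a \<Rightarrow> 'b \<Rightarrow> bool" where
  "calm_local_minimax X Y f xb yb \<longleftrightarrow> xb \<in> X \<and> yb \<in> Y \<and>
     (\<exists>\<tau>. minimax_with X Y f xb yb \<tau> \<and> calm_at_0 \<tau>)"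

end

theory Submission
  imports Defs
begin

lemma seq_at_right:
  fixes t :: "nat \<Rightarrow> real"
  assumes "\<forall>k. t k > 0" "t \<longlonglongrightarrow> 0"
  shows "filterlim t (at_right 0) sequentially"
  using assms by (auto simp: filterlim_at less_imp_neq[symmetric] intro: always_eventually)

lemma seq_prodF:
  fixes t :: "nat \<Rightarrow> real" and w :: "nat \<Rightarrow> 'v::real_normed_vector"
  assumes "\<forall>k. t k > 0" "t \<longlonglongrightarrow> 0" "w \<longlonglongrightarrow> w0"
  shows "filterlim (\<lambda>k. (t k, w k)) (at_right 0 \<times>\<^sub>F nhds w0) sequentially"
  by (rule filterlim_Pair[OF seq_at_right[OF assms(1,2)] assms(3)])

lemma prodF_nonbot: "(at_right (0::real) \<times>\<^sub>F nhds (w::'v::real_normed_vector)) \<noteq> bot"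
  by (simp add: prod_filter_eq_bot)

lemma semidiff_real:
  assumes "semidifferentiable \<psi> z"
  shows "\<exists>L. subderiv \<psi> z w = ereal L \<and>
     ((\<lambda>(t, w'). (\<psi> (z + t *\<^sub>R w') - \<psi> z) / t) \<longlongrightarrow> L) (at_right 0 \<times>\<^sub>F nhds w)"
proof -
  obtain L where L: "((\<lambda>(t, w'). (\<psi> (z + t *\<^sub>R w') - \<psi> z) / t) \<longlongrightarrow> L) (at_right 0 \<times>\<^sub>F nhds w)"
    using assms unfolding semidifferentiable_def by blast
  have "((\<lambda>p. ereal ((\<lambda>(t, w'). (\<psi> (z + t *\<^sub>R w') - \<psi> z) / t) p)) \<longlongrightarrow> ereal L) (at_right 0 \<times>\<^sub>F nhds w)"
    using L by (rule tendsto_ereal)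
  hence "subderiv \<psi> z w = ereal L"
    unfolding subderiv_def
    by (intro lim_imp_Liminf[OF prodF_nonbot]) (simp add: case_prod_beta')
  with L show ?thesis by blast
qed

lemma semidiff_seq:
  assumes "semidifferentiable \<psi> z" "\<forall>k. t k > 0" "t \<longlonglongrightarrow> 0" "w' \<longlonglongrightarrow> w"
  shows "\<exists>L. subderiv \<psi> z w = ereal L \<and> (\<lambda>k. (\<psi> (z + t k *\<^sub>R w' k) - \<psi> z) / t k) \<longlonglongrightarrow> L"
proof -
  obtain L where L: "subderiv \<psi> z w = ereal L"
     "((\<lambda>(t, w'). (\<psi> (z + t *\<^sub>R w') - \<psi> z) / t) \<longlongrightarrow> L) (at_right 0 \<times>\<^sub>F nhds w)"
    using semidiff_real[OF assms(1)] by blast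
  have "((\<lambda>(t, w'). (\<psi> (z + t *\<^sub>R w') - \<psi> z) / t) \<circ> (\<lambda>k. (t k, w' k))) \<longlonglongrightarrow> L"
    using filterlim_compose[OF L(2) seq_prodF[OF assms(2-4)]] by (simp add: o_def)
  with L show ?thesis by (auto simp: o_def)
qed

lemma subderiv_seq_lb:
  assumes "\<forall>k. t k > 0" "t \<longlonglongrightarrow> 0" "w' \<longlonglongrightarrow> w" "y < subderiv \<psi> z w"
  shows "eventually (\<lambda>k. y < ereal ((\<psi> (z + t k *\<^sub>R w' k) - \<psi> z) / t k)) sequentially"
proof -
  have "eventually (\<lambda>p. y < (\<lambda>(t, w'). ereal ((\<psi> (z + t *\<^sub>R w') - \<psi> z) / t)) p) (at_right 0 \<times>\<^sub>F nhds w)"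
    using assms(4) unfolding subderiv_def le_Liminf_iff[symmetric]
    using le_Liminf_iff by blast
  from filterlim_iff[THEN iffD1, OF seq_prodF[OF assms(1-3)], rule_format, OF this]
  show ?thesis by simp
qed

lemma ind_seq_lb:
  assumes "\<forall>k. t k > 0" "t \<longlonglongrightarrow> 0" "w' \<longlonglongrightarrow> w" "\<forall>k. z + t k *\<^sub>R w' k \<in> S"
     "y < second_subderiv_ind S z \<phi> w"
  shows "eventually (\<lambda>k. y < - 2 * \<phi> (w' k) / ereal (t k)) sequentially"
proof -
  let ?F = "inf (at_right 0 \<times>\<^sub>F nhds w) (principal {(t, w'). z + t *\<^sub>R w' \<in> S})"
  have ev: "eventually (\<lambda>p. y < (\<lambda>(t, w'). (- 2 * \<phi> w') / ereal t) p) ?F"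
    using assms(5) unfolding second_subderiv_ind_def
    using le_Liminf_iff by blast
  have fl: "filterlim (\<lambda>k. (t k, w' k)) ?F sequentially"
    using seq_prodF[OF assms(1-3)] assms(4) by (simp add: filterlim_inf filterlim_principal)
  from filterlim_iff[THEN iffD1, OF fl, rule_format, OF ev]
  show ?thesis by simp
qed

lemma subderiv_zero_le: "subderiv \<psi> z 0 \<le> 0"
proof (rule ccontr)
  assume "\<not> ?thesis"
  hence "0 < subderiv \<psi> z 0" by simp
  from subderiv_seq_lb[of "\<lambda>k. 1 / (real k + 1)" "\<lambda>k. 0", OF _ _ _ this]
  have "eventually (\<lambda>k. (0::ereal) < 0) sequentially"
    using LIMSEQ_inverse_real_of_nat_add[of 0] by (simp add: inverse_eq_divide add.commute)
  thus False by simp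
qed

lemma ereal_pq:
  assumes "ereal L - A - B < 0" "\<bar>A\<bar> \<noteq> \<infinity> \<or> \<bar>B\<bar> \<noteq> \<infinity>"
  shows "\<exists>p q. ereal p < A \<and> ereal q < B \<and> L < p + q"
proof (cases A; cases B)
  fix a b assume ab: "A = ereal a" "B = ereal b"
  hence "L < a + b" using assms by simp
  hence "ereal (a - (a+b-L)/3) < A \<and> ereal (b - (a+b-L)/3) < B \<and> L < (a - (a+b-L)/3) + (b - (a+b-L)/3)"
    using ab by (auto simp: field_simps)
  thus ?thesis by blast
next
  fix a assume ab: "A = ereal a" "B = \<infinity>"
  hence "ereal (a - 1) < A \<and> ereal (L - a + 2) < B \<and> L < (a - 1) + (L - a + 2)" by auto
  thus ?thesis by blast
next
  fix b assume ab: "A = \<infinity>" "B = ereal b"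
  hence "ereal (L - b + 2) < A \<and> ereal (b - 1) < B \<and> L < (L - b + 2) + (b - 1)" by auto
  thus ?thesis by blast
qed (use assms in auto)

lemma ereal_sum_fin:
  assumes "(x::ereal) + y = ereal r"
  shows "x = ereal (real_of_ereal x) \<and> y = ereal (real_of_ereal y) \<and> real_of_ereal x + real_of_ereal y = r"
  using assms by (cases x; cases y) auto

lemma ereal_zero_sum:
  assumes "(x::ereal) \<le> 0" "y \<le> 0" "x + y = 0"
  shows "x = 0"
  using assms by (cases x; cases y) auto

lemma twice_seq:
  assumes "twice_semidifferentiable \<psi> z" "\<forall>k. t k > 0" "t \<longlonglongrightarrow> 0" "w' \<longlonglongrightarrow> w"
  shows "\<exists>L. (second_quot \<psi> z \<longlongrightarrow> ereal L) (at_right 0 \<times>\<^sub>F nhds w) \<and>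
             (\<lambda>k. second_quot \<psi> z (t k, w' k)) \<longlonglongrightarrow> ereal L"
proof -
  obtain L where L: "(second_quot \<psi> z \<longlongrightarrow> ereal L) (at_right 0 \<times>\<^sub>F nhds w)"
    using assms(1) unfolding twice_semidifferentiable_def by blast
  have "(\<lambda>k. second_quot \<psi> z (t k, w' k)) \<longlonglongrightarrow> ereal L"
    using filterlim_compose[OF L seq_prodF[OF assms(2-4)]] by simp
  with L show ?thesis by (auto simp: o_def)
qed

lemma core:
  fixes f :: "'a::real_normed_vector \<Rightarrow> 'b::real_normed_vector \<Rightarrow> real"
    and t :: "nat \<Rightarrow> real" and u :: "nat \<Rightarrow> 'a" and h :: "nat \<Rightarrow> 'b"
  assumes ts: "twice_semidifferentiable (\<lambda>p. f (fst p) (snd p)) (xb, yb)"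
    and sep: "separation_property f xb yb"
    and H: "\<forall>h \<in> tangent_cone Y yb - {0}. dy_f f xb yb h = 0 \<longrightarrow>
           (\<bar>second_subderiv_ind X xb (dx_f f xb yb) 0\<bar> \<noteq> \<infinity> \<or>
            \<bar>second_subderiv_ind Y yb (dy_f f xb yb) h\<bar> \<noteq> \<infinity>) \<and>
           dyy_f f xb yb h - second_subderiv_ind X xb (dx_f f xb yb) 0
             - second_subderiv_ind Y yb (dy_f f xb yb) h < 0"
    and tpos: "\<forall>k. t k > 0" and t0: "t \<longlonglongrightarrow> 0" and u0: "u \<longlonglongrightarrow> 0" and hh0: "h \<longlonglongrightarrow> h0"
    and h0: "h0 \<noteq> 0"
    and inX: "\<forall>k. xb + t k *\<^sub>R u k \<in> X" and inY: "\<forall>k. yb + t k *\<^sub>R h k \<in> Y"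
    and ge: "\<forall>k. f xb yb \<le> f (xb + t k *\<^sub>R u k) (yb + t k *\<^sub>R h k)"
    and le: "eventually (\<lambda>k. f xb (yb + t k *\<^sub>R h k) \<le> f xb yb) sequentially"
  shows False
proof -
  define \<psi> where "\<psi> = (\<lambda>p. f (fst p) (snd p))"
  define z where "z = (xb, yb)"
  define dx where "dx = dx_f f xb yb"
  define dy where "dy = dy_f f xb yb"
  have sd: "semidifferentiable \<psi> z" using ts unfolding twice_semidifferentiable_def \<psi>_def z_def by blast
  have sepeq: "\<And>u h. subderiv \<psi> z (u, h) = dx u + dy h"
    using sep unfolding separation_property_def \<psi>_def z_def dx_def dy_def by blast
  have dxd: "dx = subderiv (\<lambda>x'. f x' yb) xb" unfolding dx_def dx_f_def by auto
  have dyd: "dy = subderiv (\<lambda>y'. f xb y') yb" unfolding dy_def dy_f_def by auto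
  have s00: "subderiv \<psi> z (0, 0) = 0"
  proof -
    have a: "\<forall>k. (\<lambda>k. 1 / (real k + 1)) k > 0" by simp
    have b: "(\<lambda>k. 1 / (real k + 1)) \<longlonglongrightarrow> 0"
      using LIMSEQ_inverse_real_of_nat_add[of 0] by (simp add: inverse_eq_divide add.commute)
    obtain L where L: "subderiv \<psi> z (0,0) = ereal L"
      "(\<lambda>k. (\<psi> (z + (1 / (real k + 1)) *\<^sub>R (0,0)) - \<psi> z) / (1 / (real k + 1))) \<longlonglongrightarrow> L"
      using semidiff_seq[OF sd a b tendsto_const[of "(0,0)"]] by blast
    from L(2) have "(\<lambda>k. 0::real) \<longlonglongrightarrow> L" by (simp add: zero_prod_def[symmetric])
    hence "L = 0" using LIMSEQ_unique tendsto_const by blast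
    with L show ?thesis by (simp add: zero_ereal_def)
  qed
  have dx0: "dx 0 = 0"
    using ereal_zero_sum[of "dx 0" "dy 0"] s00 sepeq[of 0 0] subderiv_zero_le dxd dyd by metis
  have w0: "(\<lambda>k. (u k, h k)) \<longlonglongrightarrow> (0, h0)" using u0 hh0 by (rule tendsto_Pair)
  obtain L1 where L1: "subderiv \<psi> z (0, h0) = ereal L1"
    "(\<lambda>k. (\<psi> (z + t k *\<^sub>R (u k, h k)) - \<psi> z) / t k) \<longlonglongrightarrow> L1"
    using semidiff_seq[OF sd tpos t0 w0] by blast
  have "L1 \<ge> 0"
  proof (rule LIMSEQ_le_const[OF L1(2)], intro exI allI impI)
    fix k show "0 \<le> (\<psi> (z + t k *\<^sub>R (u k, h k)) - \<psi> z) / t k"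
      using ge[rule_format, of k] tpos[rule_format, of k] by (auto simp: \<psi>_def z_def intro!: divide_nonneg_pos)
  qed
  have dyh0eq: "dy h0 = ereal L1" using L1(1) sepeq[of 0 h0] dx0 by simp
  have dyle: "dy h0 \<le> 0"
  proof (rule ccontr)
    assume "\<not> dy h0 \<le> 0"
    hence "0 < subderiv (\<lambda>y'. f xb y') yb h0" using dyd by simp
    from subderiv_seq_lb[OF tpos t0 hh0 this]
    have "eventually (\<lambda>k. 0 < ereal ((f xb (yb + t k *\<^sub>R h k) - f xb yb) / t k)) sequentially" .
    moreover have "eventually (\<lambda>k. (f xb (yb + t k *\<^sub>R h k) - f xb yb) / t k \<le> 0) sequentially"
      using le
    proof eventually_elim
      case (elim k)
      thus ?case using tpos[rule_format, of k] by (intro divide_nonpos_pos) auto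
    qed
    ultimately have "eventually (\<lambda>k. False) sequentially"
      by eventually_elim auto
    thus False by simp
  qed
  have dyh0: "dy h0 = 0" using dyle dyh0eq \<open>L1 \<ge> 0\<close> by (simp add: zero_ereal_def)
  have tc: "h0 \<in> tangent_cone Y yb"
    unfolding tangent_cone_def using tpos t0 hh0 inY by blast
  define A where "A = second_subderiv_ind X xb dx 0"
  define B where "B = second_subderiv_ind Y yb dy h0"
  have HH: "(\<bar>A\<bar> \<noteq> \<infinity> \<or> \<bar>B\<bar> \<noteq> \<infinity>) \<and> dyy_f f xb yb h0 - A - B < 0"
  proof -
    have "h0 \<in> tangent_cone Y yb - {0}" using tc h0 by simp
    from bspec[OF H this] dyh0[unfolded dy_def]
    show ?thesis unfolding A_def B_def dx_def dy_def by (rule mp)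
  qed
  obtain L2 where L2: "(second_quot \<psi> z \<longlongrightarrow> ereal L2) (at_right 0 \<times>\<^sub>F nhds (0, h0))"
    "(\<lambda>k. second_quot \<psi> z (t k, (u k, h k))) \<longlonglongrightarrow> ereal L2"
    using twice_seq[OF ts[folded \<psi>_def z_def] tpos t0 w0] by blast
  have sqeq: "second_quot (\<lambda>y'. f xb y') yb = second_quot \<psi> z \<circ> (\<lambda>(t, h'). (t, (0, h')))"
  proof
    fix p :: "real \<times> 'b"
    obtain s h' where p: "p = (s, h')" by (cases p)
    have "subderiv (\<lambda>y'. f xb y') yb h' = subderiv \<psi> z (0, h')"
      using sepeq[of 0 h'] dx0 dyd by simp
    thus "second_quot (\<lambda>y'. f xb y') yb p = (second_quot \<psi> z \<circ> (\<lambda>(t, h'). (t, (0, h')))) p"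
      unfolding p second_quot_def by (simp add: \<psi>_def z_def)
  qed
  have fm: "filterlim (\<lambda>(t, h'). (t, ((0::'a), h'))) (at_right 0 \<times>\<^sub>F nhds (0, h0)) (at_right (0::real) \<times>\<^sub>F nhds h0)"
  proof -
    have "filterlim (\<lambda>p. (fst p, ((0::'a), snd p))) (at_right 0 \<times>\<^sub>F nhds (0, h0)) (at_right (0::real) \<times>\<^sub>F nhds h0)"
      by (intro filterlim_Pair filterlim_fst tendsto_Pair tendsto_const filterlim_snd)
    thus ?thesis by (simp add: case_prod_beta')
  qed
  have dyy: "dyy_f f xb yb h0 = ereal L2"
    unfolding dyy_f_def second_subderiv_def sqeq o_def
    by (rule lim_imp_Liminf[OF prodF_nonbot filterlim_compose[OF L2(1) fm]])
  define a where "a = (\<lambda>k. real_of_ereal (dx (u k)))"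
  define b where "b = (\<lambda>k. real_of_ereal (dy (h k)))"
  have fin: "\<And>k. dx (u k) = ereal (a k) \<and> dy (h k) = ereal (b k)"
  proof -
    fix k
    obtain D where "subderiv \<psi> z (u k, h k) = ereal D" using semidiff_real[OF sd] by blast
    hence "dx (u k) + dy (h k) = ereal D" using sepeq by simp
    thus "dx (u k) = ereal (a k) \<and> dy (h k) = ereal (b k)"
      using ereal_sum_fin unfolding a_def b_def by blast
  qed
  define \<Delta> where "\<Delta> = (\<lambda>k. f (xb + t k *\<^sub>R u k) (yb + t k *\<^sub>R h k) - f xb yb)"
  define Q where "Q = (\<lambda>k. (\<Delta> k - t k * (a k + b k)) / ((t k)\<^sup>2 / 2))"
  have sqk: "\<And>k. second_quot \<psi> z (t k, (u k, h k)) = ereal (Q k)"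
  proof -
    fix k
    have "subderiv \<psi> z (u k, h k) = ereal (a k + b k)" using sepeq fin by simp
    moreover have "(t k)\<^sup>2 / 2 \<noteq> 0" using tpos[rule_format, of k] by simp
    ultimately show "second_quot \<psi> z (t k, (u k, h k)) = ereal (Q k)"
      unfolding second_quot_def Q_def \<Delta>_def by (simp add: \<psi>_def z_def)
  qed
  have Qlim: "Q \<longlonglongrightarrow> L2" using L2(2) unfolding sqk by (simp add: lim_ereal)
  have Qge: "\<And>k. Q k \<ge> -2 * a k / t k + -2 * b k / t k"
  proof -
    fix k
    have tk: "t k > 0" using tpos by simp
    have "\<Delta> k \<ge> 0" using ge unfolding \<Delta>_def by simp
    hence "Q k = 2 * \<Delta> k / (t k)\<^sup>2 + (-2 * a k / t k + -2 * b k / t k)"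
      unfolding Q_def using tk by (simp add: field_simps power2_eq_square)
    moreover have "2 * \<Delta> k / (t k)\<^sup>2 \<ge> 0" using \<open>\<Delta> k \<ge> 0\<close> by simp
    ultimately show "Q k \<ge> -2 * a k / t k + -2 * b k / t k" by linarith
  qed
  obtain p q where pq: "ereal p < A" "ereal q < B" "L2 < p + q"
    using ereal_pq[of L2 A B] HH dyy by auto
  have evA: "eventually (\<lambda>k. ereal p < - 2 * dx (u k) / ereal (t k)) sequentially"
    using ind_seq_lb[OF tpos t0 u0 inX pq(1)[unfolded A_def]] .
  have evB: "eventually (\<lambda>k. ereal q < - 2 * dy (h k) / ereal (t k)) sequentially"
    using ind_seq_lb[OF tpos t0 hh0 inY pq(2)[unfolded B_def]] .
  have evQ: "eventually (\<lambda>k. Q k < p + q) sequentially"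
    using order_tendstoD(2)[OF Qlim pq(3)] .
  have "eventually (\<lambda>k. False) sequentially"
    using evA evB evQ
  proof eventually_elim
    case (elim k)
    have tk: "t k > 0" using tpos by simp
    have "- 2 * dx (u k) / ereal (t k) = ereal (-2 * a k / t k)"
      using fin[of k] tk by simp
    moreover have "- 2 * dy (h k) / ereal (t k) = ereal (-2 * b k / t k)"
      using fin[of k] tk by simp
    ultimately have "p < -2 * a k / t k" "q < -2 * b k / t k" using elim by auto
    thus False using Qge[of k] elim(3) by linarith
  qed
  thus False by simp
qed

theorem mainTheorem8:
  fixes X :: "'a::euclidean_space set" and Y :: "'b::euclidean_space set"
    and f :: "'a \<Rightarrow> 'b \<Rightarrow> real" and xb :: 'a and yb :: 'b
  assumes "closed X" "X \<noteq> {}" "closed Y" "Y \<noteq> {}"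
    and standing: "\<forall>x\<in>X. \<forall>y0\<in>Y. \<forall>\<epsilon>\<ge>0. \<exists>y\<in>Y \<inter> cball y0 \<epsilon>.
                      \<forall>y'\<in>Y \<inter> cball y0 \<epsilon>. f x y' \<le> f x y"
    and "local_minimax X Y f xb yb"
    and "twice_semidifferentiable (\<lambda>p. f (fst p) (snd p)) (xb, yb)"
    and "separation_property f xb yb"
    and "\<forall>h \<in> tangent_cone Y yb - {0}. dy_f f xb yb h = 0 \<longrightarrow>
           (\<bar>second_subderiv_ind X xb (dx_f f xb yb) 0\<bar> \<noteq> \<infinity> \<or>
            \<bar>second_subderiv_ind Y yb (dy_f f xb yb) h\<bar> \<noteq> \<infinity>) \<and>
           dyy_f f xb yb h - second_subderiv_ind X xb (dx_f f xb yb) 0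
             - second_subderiv_ind Y yb (dy_f f xb yb) h < 0"
  shows "calm_local_minimax X Y f xb yb"
proof -
  note ts = assms(7) and sep = assms(8) and H = assms(9)
  have xbX: "xb \<in> X" and ybY: "yb \<in> Y" using assms(6) unfolding local_minimax_def by auto
  obtain \<tau> where mw: "minimax_with X Y f xb yb \<tau>" using assms(6) unfolding local_minimax_def by auto
  have rf: "radius_function \<tau>" using mw unfolding minimax_with_def by auto
  obtain \<delta>0 where d0: "\<delta>0 > 0" and MM: "\<And>\<delta> x y. 0 < \<delta> \<Longrightarrow> \<delta> \<le> \<delta>0 \<Longrightarrow> x \<in> X \<inter> cball xb \<delta> \<Longrightarrow>
      y \<in> Y \<inter> cball yb \<delta> \<Longrightarrow> f xb y \<le> f xb yb \<and> f xb yb \<le> Sup (f x ` (Y \<inter> cball yb (\<tau> \<delta>)))"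
    using mw unfolding minimax_with_def by blast
  have MM2: "\<And>\<delta> x. 0 < \<delta> \<Longrightarrow> \<delta> \<le> \<delta>0 \<Longrightarrow> x \<in> X \<inter> cball xb \<delta> \<Longrightarrow>
      f xb yb \<le> Sup (f x ` (Y \<inter> cball yb (\<tau> \<delta>)))"
    using MM ybY by (meson IntI centre_in_cball less_imp_le)
  have tau_nn: "\<And>d. d \<ge> 0 \<Longrightarrow> \<tau> d \<ge> 0" using rf unfolding radius_function_def by auto
  have tau_lim: "(\<tau> \<longlongrightarrow> 0) (at_right 0)" using rf unfolding radius_function_def by auto
  have supmax: "\<And>x \<epsilon>. x \<in> X \<Longrightarrow> \<epsilon> \<ge> 0 \<Longrightarrow> \<exists>ym \<in> Y \<inter> cball yb \<epsilon>.
        Sup (f x ` (Y \<inter> cball yb \<epsilon>)) = f x ym \<and> (\<forall>y' \<in> Y \<inter> cball yb \<epsilon>. f x y' \<le> f x ym)"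
  proof -
    fix x \<epsilon> assume "x \<in> X" "(\<epsilon>::real) \<ge> 0"
    then obtain ym where ym: "ym \<in> Y \<inter> cball yb \<epsilon>" "\<forall>y' \<in> Y \<inter> cball yb \<epsilon>. f x y' \<le> f x ym"
      using standing ybY by blast
    have "Sup (f x ` (Y \<inter> cball yb \<epsilon>)) = f x ym"
      by (rule cSup_eq_maximum) (use ym in auto)
    with ym show "\<exists>ym \<in> Y \<inter> cball yb \<epsilon>.
        Sup (f x ` (Y \<inter> cball yb \<epsilon>)) = f x ym \<and> (\<forall>y' \<in> Y \<inter> cball yb \<epsilon>. f x y' \<le> f x ym)" by blast
  qed
  define P where "P = (\<lambda>\<kappa> \<delta>1. \<forall>\<delta>. 0 < \<delta> \<and> \<delta> \<le> \<delta>1 \<longrightarrow>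
      (\<forall>x\<in>X \<inter> cball xb \<delta>. f xb yb \<le> Sup (f x ` (Y \<inter> cball yb (\<kappa> * \<delta>)))))"
  have "\<exists>n::nat. P (real n + 1) (min \<delta>0 (1 / (real n + 1)))"
  proof (rule ccontr)
    assume A: "\<not> ?thesis"
    have "\<forall>n::nat. \<exists>\<delta> x. 0 < \<delta> \<and> \<delta> \<le> min \<delta>0 (1 / (real n + 1)) \<and> x \<in> X \<inter> cball xb \<delta> \<and>
       \<not> f xb yb \<le> Sup (f x ` (Y \<inter> cball yb ((real n + 1) * \<delta>)))"
    proof
      fix n :: nat
      from A have "\<not> P (real n + 1) (min \<delta>0 (1 / (real n + 1)))" by blast
      thus "\<exists>\<delta> x. 0 < \<delta> \<and> \<delta> \<le> min \<delta>0 (1 / (real n + 1)) \<and> x \<in> X \<inter> cball xb \<delta> \<and>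
       \<not> f xb yb \<le> Sup (f x ` (Y \<inter> cball yb ((real n + 1) * \<delta>)))"
        unfolding P_def by blast
    qed
    then obtain \<delta> x where dx: "\<And>n. 0 < \<delta> n \<and> \<delta> n \<le> min \<delta>0 (1 / (real n + 1)) \<and> x n \<in> X \<inter> cball xb (\<delta> n) \<and>
       \<not> f xb yb \<le> Sup (f (x n) ` (Y \<inter> cball yb ((real n + 1) * \<delta> n)))"
      by metis
    have "\<forall>n. \<exists>y. y \<in> Y \<inter> cball yb (\<tau> (\<delta> n)) \<and> f xb yb \<le> f (x n) y \<and> (real n + 1) * \<delta> n < dist yb y"
    proof
      fix n
      have dn: "0 < \<delta> n" "\<delta> n \<le> \<delta>0" "x n \<in> X" "x n \<in> X \<inter> cball xb (\<delta> n)" using dx[of n] by auto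
      obtain ym where ym: "ym \<in> Y \<inter> cball yb (\<tau> (\<delta> n))" "Sup (f (x n) ` (Y \<inter> cball yb (\<tau> (\<delta> n)))) = f (x n) ym"
        using supmax[OF dn(3) tau_nn[of "\<delta> n"]] dn(1) by auto
      have ge: "f xb yb \<le> f (x n) ym" using MM2[OF dn(1,2,4)] ym(2) by simp
      obtain ym2 where ym2: "Sup (f (x n) ` (Y \<inter> cball yb ((real n + 1) * \<delta> n))) = f (x n) ym2"
        "\<forall>y' \<in> Y \<inter> cball yb ((real n + 1) * \<delta> n). f (x n) y' \<le> f (x n) ym2"
        using supmax[OF dn(3), of "(real n + 1) * \<delta> n"] dn(1) by auto
      have "ym \<notin> cball yb ((real n + 1) * \<delta> n)"
        using ym2 ge dx[of n] ym(1) by force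
      hence "(real n + 1) * \<delta> n < dist yb ym" by simp
      with ym ge show "\<exists>y. y \<in> Y \<inter> cball yb (\<tau> (\<delta> n)) \<and> f xb yb \<le> f (x n) y \<and> (real n + 1) * \<delta> n < dist yb y"
        by blast
    qed
    then obtain y where y: "\<And>n. y n \<in> Y \<inter> cball yb (\<tau> (\<delta> n)) \<and> f xb yb \<le> f (x n) (y n) \<and> (real n + 1) * \<delta> n < dist yb (y n)"
      by metis
    define t where "t = (\<lambda>n. norm (y n - yb))"
    have tdist: "\<And>n. t n = dist yb (y n)" unfolding t_def by (simp add: dist_norm norm_minus_commute)
    have tpos: "\<forall>n. t n > 0"
    proof
      fix n have "0 < (real n + 1) * \<delta> n" using dx[of n] by simp
      thus "t n > 0" using y[of n] tdist[of n] by linarith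
    qed
    have tle: "\<And>n. t n \<le> \<tau> (\<delta> n)" using y tdist by simp
    have dpos: "\<forall>n. \<delta> n > 0" using dx by simp
    have dlim: "\<delta> \<longlonglongrightarrow> 0"
    proof (rule tendsto_sandwich[of "\<lambda>n. 0" _ _ "\<lambda>n. 1 / (real n + 1)"])
      show "\<forall>\<^sub>F n in sequentially. 0 \<le> \<delta> n" using dpos by (simp add: less_imp_le)
      show "\<forall>\<^sub>F n in sequentially. \<delta> n \<le> 1 / (real n + 1)" using dx by simp
      show "(\<lambda>n. 1 / (real n + 1)) \<longlonglongrightarrow> 0"
        using LIMSEQ_inverse_real_of_nat_add[of 0] by (simp add: inverse_eq_divide add.commute)
    qed simp
    have "(\<lambda>n. \<tau> (\<delta> n)) \<longlonglongrightarrow> 0"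
      using filterlim_compose[OF tau_lim seq_at_right[OF dpos dlim]] by simp
    hence tlim: "t \<longlonglongrightarrow> 0"
      by (intro tendsto_sandwich[of "\<lambda>n. 0" t _ "\<lambda>n. \<tau> (\<delta> n)"]) (use tpos tle in \<open>auto simp: less_imp_le\<close>)
    define hh where "hh = (\<lambda>n. (1 / t n) *\<^sub>R (y n - yb))"
    define u where "u = (\<lambda>n. (1 / t n) *\<^sub>R (x n - xb))"
    have hhs: "\<forall>n. hh n \<in> sphere 0 1"
    proof
      fix n show "hh n \<in> sphere 0 1" using tpos[rule_format, of n]
        unfolding hh_def by (simp add: t_def)
    qed
    have ulim: "u \<longlonglongrightarrow> 0"
    proof -
      have "(\<lambda>n. norm (u n)) \<longlonglongrightarrow> 0"
      proof (rule tendsto_sandwich[of "\<lambda>n. 0" _ _ "\<lambda>n. 1 / (real n + 1)"])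
        show "\<forall>\<^sub>F n in sequentially. 0 \<le> norm (u n)" by simp
        show "\<forall>\<^sub>F n in sequentially. norm (u n) \<le> 1 / (real n + 1)"
        proof (rule always_eventually, rule allI)
          fix n
          have tp: "t n > 0" using tpos by simp
          have nx: "norm (x n - xb) \<le> \<delta> n" using dx[of n] by (simp add: dist_norm norm_minus_commute)
          have "(real n + 1) * \<delta> n < t n" using y[of n] tdist[of n] by simp
          hence "(real n + 1) * norm (x n - xb) \<le> t n"
            using nx by (smt (verit) mult_left_mono of_nat_0_le_iff)
          hence "norm (x n - xb) / t n \<le> 1 / (real n + 1)"
            using tp by (simp add: field_simps)
          thus "norm (u n) \<le> 1 / (real n + 1)" unfolding u_def using tp by simp
        qed
        show "(\<lambda>n. 1 / (real n + 1)) \<longlonglongrightarrow> 0"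
          using LIMSEQ_inverse_real_of_nat_add[of 0] by (simp add: inverse_eq_divide add.commute)
      qed simp
      thus ?thesis using tendsto_norm_zero_iff by blast
    qed
    obtain l r where l: "l \<in> sphere 0 1" and r: "strict_mono r" and hl: "(hh \<circ> r) \<longlonglongrightarrow> l"
      using compact_imp_seq_compact[OF compact_sphere[of "0::'b" 1]] hhs
      unfolding seq_compact_def by blast
    have xeq: "\<And>n. xb + t n *\<^sub>R u n = x n" using tpos unfolding u_def by (simp add: less_imp_neq[symmetric])
    have yeq: "\<And>n. yb + t n *\<^sub>R hh n = y n" using tpos unfolding hh_def by (simp add: less_imp_neq[symmetric])
    have ev: "eventually (\<lambda>k. (t \<circ> r) k < \<delta>0) sequentially"
      using order_tendstoD(2)[OF LIMSEQ_subseq_LIMSEQ[OF tlim r] d0] .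
    show False
    proof (rule core[of f xb yb Y X "t \<circ> r" "u \<circ> r" "hh \<circ> r" l])
      show "twice_semidifferentiable (\<lambda>p. f (fst p) (snd p)) (xb, yb)" by (rule ts)
      show "separation_property f xb yb" by (rule sep)
      show "\<forall>h\<in>tangent_cone Y yb - {0}. dy_f f xb yb h = 0 \<longrightarrow>
        (\<bar>second_subderiv_ind X xb (dx_f f xb yb) 0\<bar> \<noteq> \<infinity> \<or> \<bar>second_subderiv_ind Y yb (dy_f f xb yb) h\<bar> \<noteq> \<infinity>) \<and>
        dyy_f f xb yb h - second_subderiv_ind X xb (dx_f f xb yb) 0 - second_subderiv_ind Y yb (dy_f f xb yb) h < 0"
        by (rule H)
      show "\<forall>k. 0 < (t \<circ> r) k" using tpos by simp
      show "(t \<circ> r) \<longlonglongrightarrow> 0" using LIMSEQ_subseq_LIMSEQ[OF tlim r] .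
      show "(u \<circ> r) \<longlonglongrightarrow> 0" using LIMSEQ_subseq_LIMSEQ[OF ulim r] .
      show "(hh \<circ> r) \<longlonglongrightarrow> l" by (rule hl)
      show "l \<noteq> 0" using l by auto
      show "\<forall>k. xb + (t \<circ> r) k *\<^sub>R (u \<circ> r) k \<in> X" using xeq dx by auto
      show "\<forall>k. yb + (t \<circ> r) k *\<^sub>R (hh \<circ> r) k \<in> Y" using yeq y by auto
      show "\<forall>k. f xb yb \<le> f (xb + (t \<circ> r) k *\<^sub>R (u \<circ> r) k) (yb + (t \<circ> r) k *\<^sub>R (hh \<circ> r) k)"
        using xeq yeq y by simp
      show "\<forall>\<^sub>F k in sequentially. f xb (yb + (t \<circ> r) k *\<^sub>R (hh \<circ> r) k) \<le> f xb yb"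
        using ev
      proof eventually_elim
        case (elim k)
        have "y (r k) \<in> Y \<inter> cball yb \<delta>0" using y[of "r k"] elim tdist[of "r k"] by simp
        moreover have "xb \<in> X \<inter> cball xb \<delta>0" using xbX d0 by simp
        ultimately have "f xb (y (r k)) \<le> f xb yb" using MM[OF d0 order_refl] by blast
        thus ?case using yeq by simp
      qed
    qed
  qed
  then obtain n :: nat where Pn: "P (real n + 1) (min \<delta>0 (1 / (real n + 1)))" by blast
  define \<tau>' where "\<tau>' = (\<lambda>d::real. (real n + 1) * d)"
  have rf': "radius_function \<tau>'"
  proof -
    have "((\<lambda>d::real. (real n + 1) * d) \<longlongrightarrow> (real n + 1) * 0) (at_right 0)"
      by (intro tendsto_intros)
    thus ?thesis unfolding radius_function_def \<tau>'_def by simp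
  qed
  have "minimax_with X Y f xb yb \<tau>'"
    unfolding minimax_with_def
  proof (intro conjI rf' exI[of _ "min \<delta>0 (1 / (real n + 1))"] allI impI ballI)
    show "0 < min \<delta>0 (1 / (real n + 1))" using d0 by simp
  next
    fix \<delta> x y assume d: "0 < \<delta> \<and> \<delta> \<le> min \<delta>0 (1 / (real n + 1))" and x: "x \<in> X \<inter> cball xb \<delta>"
      and yy: "y \<in> Y \<inter> cball yb \<delta>"
    show "f xb y \<le> f xb yb" using MM[of \<delta> x y] d x yy by simp
    show "f xb yb \<le> Sup (f x ` (Y \<inter> cball yb (\<tau>' \<delta>)))"
      using Pn d x unfolding P_def \<tau>'_def by blast
  qed
  moreover have "calm_at_0 \<tau>'"
    unfolding calm_at_0_def \<tau>'_def
    by (rule exI[of _ "real n + 1"]) (auto intro: exI[of _ 1])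
  ultimately show ?thesis unfolding calm_local_minimax_def using xbX ybY by blast
qed

end
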